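(* For every cartesian cubical set $X$ and every $n\ge 0$, \[ (X_{\mathrm{I}})_n\ \cong\ X_n\times X_{n-1}^{\binom{n}{n-1}}\times\dots\times X_1^{\binom{n}{1}}\times X_0, \] where $X_k^{m}$ denotes the $m$-fold product of the set $X_k$, and $X_{\mathrm{I}}$ is the value at $X$ of the right adjoint to the path object functor $Y\mapsto Y^{\mathrm{I}}$.
   Context: Let $\mathbb{B}$ be the category of finite sets $[n]=\{\bot,x_1,\dots,x_n,\top\}$ ($n\ge0$, $\bot\ne\top$) and functions preserving $\bot,\top$; the cartesian cube category is $\mathbb{C}_\times=\mathbb{B}^{op}$, and cartesian cubical sets are presheaves on $\mathbb{C}_\times$. For a cubical set $X$, $X_k=X([k])$. $\mathrm{I}$ is the representable presheaf on $[1]$ and $Y^{\mathrm{I}}$ is the exponential; the functor $Y\mapsto Y^{\mathrm{I}}$ has a right adjoint, whose value at $X$ is written $X_{\mathrm{I}}$. *)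

theory Defs
  imports Main
begin

text \<open>
  The category B: objects [n] = {bot, x_1, ..., x_n, top}, encoded as {0..Suc n}
  with 0 = bot, i = x_i (1 \<le> i \<le> n), Suc n = top.  A morphism [m] -> [n] is a
  function nat => nat preserving bot and top, mapping {0..Suc m} into {0..Suc n},
  and equal to 0 outside {0..Suc m} (so that morphisms are unique representatives).
\<close>

definition bmor :: "nat \<Rightarrow> nat \<Rightarrow> (nat \<Rightarrow> nat) \<Rightarrow> bool" where
  "bmor m n f \<longleftrightarrow> f 0 = 0 \<and> f (Suc m) = Suc n \<and> (\<forall>i\<le>Suc m. f i \<le> Suc n)
      \<and> (\<forall>i>Suc m. f i = 0)"

definition bid :: "nat \<Rightarrow> nat \<Rightarrow> nat" where
  "bid n = (\<lambda>i. if i \<le> Suc n then i else 0)"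

text \<open>
  A cartesian cubical set (presheaf on C = B^op) is a covariant functor B -> Set:
  a family of carriers X_n (fst X n) together with actions
  snd X m n f : X_m -> X_n for every f : [m] -> [n] in B.
\<close>

type_synonym 'a cset = "(nat \<Rightarrow> 'a set) \<times> (nat \<Rightarrow> nat \<Rightarrow> (nat \<Rightarrow> nat) \<Rightarrow> 'a \<Rightarrow> 'a)"

definition is_cset :: "'a cset \<Rightarrow> bool" where
  "is_cset X \<longleftrightarrow>
     (\<forall>m n f x. bmor m n f \<and> x \<in> fst X m \<longrightarrow> snd X m n f x \<in> fst X n) \<and>
     (\<forall>n x. x \<in> fst X n \<longrightarrow> snd X n n (bid n) x = x) \<and>
     (\<forall>l m n f g x. bmor l m f \<and> bmor m n g \<and> x \<in> fst X l \<longrightarrow>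
        snd X l n (g \<circ> f) x = snd X m n g (snd X l m f x))"

definition cnat :: "'a cset \<Rightarrow> 'b cset \<Rightarrow> (nat \<Rightarrow> 'a \<Rightarrow> 'b) set" where
  "cnat X Y = {\<eta>. (\<forall>n x. x \<in> fst X n \<longrightarrow> \<eta> n x \<in> fst Y n) \<and>
                   (\<forall>n x. x \<notin> fst X n \<longrightarrow> \<eta> n x = undefined) \<and>
                   (\<forall>m n f x. bmor m n f \<and> x \<in> fst X m \<longrightarrow>
                        \<eta> n (snd X m n f x) = snd Y m n f (\<eta> m x))}"

text \<open>Representable presheaf y[n]: y[n]_m = Hom_C([m],[n]) = Hom_B([n],[m]).\<close>

definition yon :: "nat \<Rightarrow> (nat \<Rightarrow> nat) cset" where
  "yon n = (\<lambda>m. {f. bmor n m f}, \<lambda>m m' g f. g \<circ> f)"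

definition interval :: "(nat \<Rightarrow> nat) cset" where
  "interval = yon 1"

definition cprod :: "'a cset \<Rightarrow> 'b cset \<Rightarrow> ('a \<times> 'b) cset" where
  "cprod X Y = (\<lambda>m. fst X m \<times> fst Y m,
                \<lambda>m n f p. (snd X m n f (fst p), snd Y m n f (snd p)))"

text \<open>Exponential Y^I: (Y^I)_m = Hom(y[m] \<times> I, Y); a B-map g : [m] -> [m'] acts by
  precomposition with y(g) \<times> id : y[m'] \<times> I -> y[m] \<times> I.\<close>

definition cexp :: "'b cset \<Rightarrow> (nat \<Rightarrow> ((nat \<Rightarrow> nat) \<times> (nat \<Rightarrow> nat)) \<Rightarrow> 'b) cset" where
  "cexp Y = (\<lambda>m. cnat (cprod (yon m) interval) Y,
             \<lambda>m m' g \<eta>. (\<lambda>k p. if p \<in> fst (cprod (yon m') interval) k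
                               then \<eta> k (fst p \<circ> g, snd p) else undefined))"

text \<open>
  The right adjoint X_I of Y |-> Y^I, given (as forced by the Yoneda lemma) by
  (X_I)_n = Hom(y[n]^I, X); a B-map g : [n] -> [n'] acts by precomposition with
  (y g)^I : y[n']^I -> y[n]^I, where (y g)^I postcomposes with y g : y[n'] -> y[n].
\<close>

definition path_radj :: "'a cset \<Rightarrow>
    (nat \<Rightarrow> (nat \<Rightarrow> ((nat \<Rightarrow> nat) \<times> (nat \<Rightarrow> nat)) \<Rightarrow> (nat \<Rightarrow> nat)) \<Rightarrow> 'a) cset" where
  "path_radj X = (\<lambda>n. cnat (cexp (yon n)) X,
     \<lambda>n n' g \<theta>. (\<lambda>k \<zeta>. if \<zeta> \<in> fst (cexp (yon n')) k
        then \<theta> k (\<lambda>j p. if p \<in> fst (cprod (yon k) interval) j then \<zeta> j p \<circ> g else undefined)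
        else undefined))"

text \<open>The set X_n \<times> X_{n-1}^(n choose n-1) \<times> ... \<times> X_1^(n choose 1) \<times> X_0, encoded as
  families f k j \<in> X_k for k \<le> n, j < n choose k (undefined elsewhere).\<close>

definition binom_prod :: "'a cset \<Rightarrow> nat \<Rightarrow> (nat \<Rightarrow> nat \<Rightarrow> 'a) set" where
  "binom_prod X n = {f. (\<forall>k\<le>n. \<forall>j<n choose k. f k j \<in> fst X k) \<and>
                        (\<forall>k j. (n < k \<or> n choose k \<le> j) \<longrightarrow> f k j = undefined)}"

end

theory Submission
  imports Defs "HOL-Library.FuncSet"
begin


lemma bmor_comp: "bmor l m f \<Longrightarrow> bmor m n g \<Longrightarrow> bmor l n (g \<circ> f)"
  unfolding bmor_def by auto

lemma bmor_bid: "bmor n n (bid n)"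
  unfolding bmor_def bid_def by auto

lemma bid_left: "bmor m n f \<Longrightarrow> bid n \<circ> f = f"
  proof
  fix x assume "bmor m n f"
  then show "(bid n \<circ> f) x = f x"
    unfolding bmor_def bid_def by (cases "x \<le> Suc m") auto
qed

lemma bid_right: "bmor m n f \<Longrightarrow> f \<circ> bid m = f"
  unfolding bmor_def bid_def by (auto simp: fun_eq_iff)

definition dec :: "('i \<Rightarrow> nat) \<Rightarrow> ('i \<Rightarrow> 'b) \<Rightarrow> 'i set \<Rightarrow> 'b cset \<Rightarrow> nat \<Rightarrow> 'b \<Rightarrow> 'i \<times> (nat \<Rightarrow> nat)" where
  "dec d e I P m p = (THE ig. fst ig \<in> I \<and> bmor (d (fst ig)) m (snd ig) \<and> p = snd P (d (fst ig)) m (snd ig) (e (fst ig)))"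

lemma free_hom:
  fixes P :: "'b cset" and X :: "'a cset" and I :: "'i set" and d :: "'i \<Rightarrow> nat" and e :: "'i \<Rightarrow> 'b"
  assumes X: "is_cset X"
  and gen_in: "\<And>i m g. i\<in>I \<Longrightarrow> bmor (d i) m g \<Longrightarrow> snd P (d i) m g (e i) \<in> fst P m"
  and gen_id: "\<And>i. i\<in>I \<Longrightarrow> snd P (d i) (d i) (bid (d i)) (e i) = e i"
  and gen_comp: "\<And>i m m' g h. i\<in>I \<Longrightarrow> bmor (d i) m g \<Longrightarrow> bmor m m' h \<Longrightarrow>
        snd P m m' h (snd P (d i) m g (e i)) = snd P (d i) m' (h\<circ>g) (e i)"
  and decomp: "\<And>m p. p \<in> fst P m \<Longrightarrow> \<exists>i g. i\<in>I \<and> bmor (d i) m g \<and> p = snd P (d i) m g (e i)"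
  and uniq: "\<And>m i g i' g'. i\<in>I \<Longrightarrow> i'\<in>I \<Longrightarrow> bmor (d i) m g \<Longrightarrow> bmor (d i') m g' \<Longrightarrow>
        snd P (d i) m g (e i) = snd P (d i') m g' (e i') \<Longrightarrow> i = i' \<and> g = g'"
  shows "bij_betw (\<lambda>\<theta>. \<lambda>i\<in>I. \<theta> (d i) (e i)) (cnat P X) (PiE I (\<lambda>i. fst X (d i)))"
proof -
  have X1: "\<And>m n f x. bmor m n f \<Longrightarrow> x \<in> fst X m \<Longrightarrow> snd X m n f x \<in> fst X n"
   and X2: "\<And>n x. x \<in> fst X n \<Longrightarrow> snd X n n (bid n) x = x"
   and X3: "\<And>l m n f g x. bmor l m f \<Longrightarrow> bmor m n g \<Longrightarrow> x \<in> fst X l \<Longrightarrow>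
        snd X l n (g \<circ> f) x = snd X m n g (snd X l m f x)"
    using X unfolding is_cset_def by blast+
  have ein: "\<And>i. i \<in> I \<Longrightarrow> e i \<in> fst P (d i)"
    using gen_in[OF _ bmor_bid] gen_id by metis
  have dec_eq: "dec d e I P m p = (i, g)" if "i \<in> I" "bmor (d i) m g" "p = snd P (d i) m g (e i)" for m p i g
    unfolding dec_def
    apply (rule the_equality)
    using that uniq by auto
  have dec_ex: "\<exists>i g. dec d e I P m p = (i,g) \<and> i\<in>I \<and> bmor (d i) m g \<and> p = snd P (d i) m g (e i)"
    if "p \<in> fst P m" for m p
    using decomp[OF that] dec_eq by blast
  have nat_gen: "\<theta> m (snd P (d i) m g (e i)) = snd X (d i) m g (\<theta> (d i) (e i))"
    if "\<theta> \<in> cnat P X" "i \<in> I" "bmor (d i) m g" for \<theta> i m g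
    using that ein unfolding cnat_def by blast
  show ?thesis
  proof (rule bij_betwI')
    fix \<theta> \<theta>' assume th: "\<theta> \<in> cnat P X" "\<theta>' \<in> cnat P X"
    show "((\<lambda>i\<in>I. \<theta> (d i) (e i)) = (\<lambda>i\<in>I. \<theta>' (d i) (e i))) = (\<theta> = \<theta>')"
    proof
      assume eq: "(\<lambda>i\<in>I. \<theta> (d i) (e i)) = (\<lambda>i\<in>I. \<theta>' (d i) (e i))"
      have ge: "\<theta> (d i) (e i) = \<theta>' (d i) (e i)" if "i \<in> I" for i
        using fun_cong[OF eq, of i] that by simp
      show "\<theta> = \<theta>'"
      proof (intro ext)
        fix m p
        show "\<theta> m p = \<theta>' m p"
        proof (cases "p \<in> fst P m")
          case True
          then obtain i g where "i\<in>I" "bmor (d i) m g" "p = snd P (d i) m g (e i)"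
            using decomp by blast
          then show ?thesis using nat_gen[OF th(1)] nat_gen[OF th(2)] ge by simp
        next
          case False then show ?thesis using th unfolding cnat_def by simp
        qed
      qed
    qed simp
  next
    fix \<theta> assume "\<theta> \<in> cnat P X"
    then show "(\<lambda>i\<in>I. \<theta> (d i) (e i)) \<in> PiE I (\<lambda>i. fst X (d i))"
      using ein unfolding cnat_def by auto
  next
    fix x assume x: "x \<in> PiE I (\<lambda>i. fst X (d i))"
    define \<theta> where "\<theta> = (\<lambda>m p. if p \<in> fst P m then
        snd X (d (fst (dec d e I P m p))) m (snd (dec d e I P m p)) (x (fst (dec d e I P m p)))
        else undefined)"
    have th_gen: "\<theta> m (snd P (d i) m g (e i)) = snd X (d i) m g (x i)"
      if "i \<in> I" "bmor (d i) m g" for i m g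
      using that gen_in dec_eq unfolding \<theta>_def by simp
    have "\<theta> \<in> cnat P X"
      unfolding cnat_def
    proof (intro CollectI conjI allI impI)
      fix m p assume p: "p \<in> fst P m"
      then obtain i g where "i\<in>I" "bmor (d i) m g" "p = snd P (d i) m g (e i)"
        using decomp by blast
      then show "\<theta> m p \<in> fst X m" using th_gen X1[OF _ PiE_mem[OF x]] by auto
    next
      fix m p assume "p \<notin> fst P m" then show "\<theta> m p = undefined" unfolding \<theta>_def by simp
    next
      fix m n f p assume a: "bmor m n f \<and> p \<in> fst P m"
      then obtain i g where ig: "i\<in>I" "bmor (d i) m g" "p = snd P (d i) m g (e i)"
        using decomp by blast
      have "\<theta> n (snd P m n f p) = \<theta> n (snd P (d i) n (f \<circ> g) (e i))"
        using ig a gen_comp by simp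
      also have "\<dots> = snd X (d i) n (f \<circ> g) (x i)"
        using th_gen ig a bmor_comp by blast
      also have "\<dots> = snd X m n f (snd X (d i) m g (x i))"
        using X3[OF ig(2) _ PiE_mem[OF x ig(1)]] a by blast
      also have "\<dots> = snd X m n f (\<theta> m p)" using th_gen ig by simp
      finally show "\<theta> n (snd P m n f p) = snd X m n f (\<theta> m p)" .
    qed
    moreover have "(\<lambda>i\<in>I. \<theta> (d i) (e i)) = x"
    proof
      fix i show "(\<lambda>i\<in>I. \<theta> (d i) (e i)) i = x i"
      proof (cases "i \<in> I")
        case True
        then have "\<theta> (d i) (e i) = x i"
          using th_gen[OF True bmor_bid] gen_id X2 x by auto
        then show ?thesis using True by simp
      next
        case False then show ?thesis using x by auto
      qed
    qed
    ultimately show "\<exists>\<theta>\<in>cnat P X. x = (\<lambda>i\<in>I. \<theta> (d i) (e i))" by blast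
  qed
qed



definition cop :: "nat \<Rightarrow> (nat \<Rightarrow> nat) \<Rightarrow> (nat \<Rightarrow> nat) \<Rightarrow> nat \<Rightarrow> nat" where
  "cop m a b = (\<lambda>i. if i \<le> m then a i else if i = Suc m then b 1 else if i = Suc (Suc m) then a (Suc m) else 0)"
definition linj :: "nat \<Rightarrow> nat \<Rightarrow> nat" where
  "linj m = (\<lambda>i. if i \<le> m then i else if i = Suc m then Suc (Suc m) else 0)"
definition rinj :: "nat \<Rightarrow> nat \<Rightarrow> nat" where
  "rinj m = (\<lambda>i. if i = 0 then 0 else if i = 1 then Suc m else if i = 2 then Suc (Suc m) else 0)"
definition mk :: "nat \<Rightarrow> (nat \<Rightarrow> nat) \<Rightarrow> nat \<Rightarrow> ((nat \<Rightarrow> nat) \<times> (nat \<Rightarrow> nat)) \<Rightarrow> (nat \<Rightarrow> nat)" where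
  "mk m F = (\<lambda>k p. if p \<in> fst (cprod (yon m) interval) k then cop m (fst p) (snd p) \<circ> F else undefined)"
definition code :: "nat \<Rightarrow> (nat \<Rightarrow> ((nat \<Rightarrow> nat) \<times> (nat \<Rightarrow> nat)) \<Rightarrow> (nat \<Rightarrow> nat)) \<Rightarrow> nat \<Rightarrow> nat" where
  "code m \<eta> = \<eta> (Suc m) (linj m, rinj m)"

lemma dom_eq: "fst (cprod (yon m) interval) k = {a. bmor m k a} \<times> {b. bmor 1 k b}"
  by (simp add: cprod_def yon_def interval_def)
lemma cprod_act: "snd (cprod (yon m) interval) k k' h p = (h \<circ> fst p, h \<circ> snd p)"
  by (simp add: cprod_def yon_def interval_def)
lemma yon_fst: "fst (yon n) k = {f. bmor n k f}" by (simp add: yon_def)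
lemma yon_snd: "snd (yon n) k k' h f = h \<circ> f" by (simp add: yon_def)
lemma cexp_fst: "fst (cexp Y) m = cnat (cprod (yon m) interval) Y" by (simp add: cexp_def)
lemma cexp_snd: "snd (cexp Y) m m' g \<eta> = (\<lambda>k p. if p \<in> fst (cprod (yon m') interval) k
                               then \<eta> k (fst p \<circ> g, snd p) else undefined)" by (simp add: cexp_def)

lemma bmor_linj: "bmor m (Suc m) (linj m)" unfolding bmor_def linj_def by auto
lemma bmor_rinj: "bmor 1 (Suc m) (rinj m)" unfolding bmor_def rinj_def by auto
lemma bmor_cop: "bmor m k a \<Longrightarrow> bmor 1 k b \<Longrightarrow> bmor (Suc m) k (cop m a b)"
  unfolding bmor_def cop_def by auto

lemma cop_linj: "bmor m k a \<Longrightarrow> cop m a b \<circ> linj m = a"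
proof
  fix x assume "bmor m k a"
  then show "(cop m a b \<circ> linj m) x = a x"
    unfolding bmor_def cop_def linj_def by (cases "x \<le> m"; cases "x = Suc m") auto
qed
lemma cop_rinj: "bmor m k a \<Longrightarrow> bmor 1 k b \<Longrightarrow> cop m a b \<circ> rinj m = b"
proof
  fix x assume "bmor m k a" "bmor 1 k b"
  then show "(cop m a b \<circ> rinj m) x = b x"
    unfolding bmor_def cop_def rinj_def
    by (cases "x = 0"; cases "x = 1"; cases "x = 2") (auto simp: numeral_2_eq_2)
qed
lemma comp_cop: "h 0 = 0 \<Longrightarrow> h \<circ> cop m a b = cop m (h \<circ> a) (h \<circ> b)"
  unfolding cop_def by (auto simp: fun_eq_iff)
lemma cop_linj_rinj: "cop m (linj m) (rinj m) = bid (Suc m)"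
  unfolding cop_def linj_def rinj_def bid_def by (auto simp: fun_eq_iff)

lemma bmor0: "bmor m n f \<Longrightarrow> f 0 = 0" unfolding bmor_def by simp

lemma yoneda:
  assumes "\<eta> \<in> cnat (cprod (yon m) interval) (yon n)"
  shows "bmor n (Suc m) (code m \<eta>)" "\<eta> = mk m (code m \<eta>)"
proof -
  have dom1: "(linj m, rinj m) \<in> fst (cprod (yon m) interval) (Suc m)"
    using bmor_linj bmor_rinj dom_eq by auto
  then show "bmor n (Suc m) (code m \<eta>)"
    using assms unfolding cnat_def code_def yon_fst by blast
  show "\<eta> = mk m (code m \<eta>)"
  proof (rule ext, rule ext)
    fix k p
    show "\<eta> k p = mk m (code m \<eta>) k p"
    proof (cases "p \<in> fst (cprod (yon m) interval) k")
      case True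
      then obtain a b where p: "p = (a,b)" "bmor m k a" "bmor 1 k b" using dom_eq by auto
      have hb: "bmor (Suc m) k (cop m a b)" using bmor_cop p by blast
      have "\<eta> k (snd (cprod (yon m) interval) (Suc m) k (cop m a b) (linj m, rinj m))
          = snd (yon n) (Suc m) k (cop m a b) (\<eta> (Suc m) (linj m, rinj m))"
        using assms dom1 hb unfolding cnat_def by blast
      then have "\<eta> k (a, b) = cop m a b \<circ> code m \<eta>"
        using cop_linj[OF p(2)] cop_rinj[OF p(2,3)] by (simp add: cprod_act yon_snd code_def)
      then show ?thesis using True p unfolding mk_def by simp
    next
      case False
      have "\<eta> k p = undefined" using assms False unfolding cnat_def by blast
      then show ?thesis using False unfolding mk_def by simp
    qed
  qed
qed

lemma mk_in:
  assumes F: "bmor n (Suc m) F"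
  shows "mk m F \<in> cnat (cprod (yon m) interval) (yon n)"
  unfolding cnat_def
proof (intro CollectI conjI allI impI)
  fix k p assume "p \<in> fst (cprod (yon m) interval) k"
  then show "mk m F k p \<in> fst (yon n) k"
    using F bmor_cop bmor_comp unfolding mk_def dom_eq yon_fst by auto
next
  fix k p assume "p \<notin> fst (cprod (yon m) interval) k"
  then show "mk m F k p = undefined" unfolding mk_def by simp
next
  fix k k' h p assume a: "bmor k k' h \<and> p \<in> fst (cprod (yon m) interval) k"
  then have "snd (cprod (yon m) interval) k k' h p \<in> fst (cprod (yon m) interval) k'"
    using bmor_comp unfolding cprod_act dom_eq by auto
  then show "mk m F k' (snd (cprod (yon m) interval) k k' h p) =
             snd (yon n) k k' h (mk m F k p)"
    using a comp_cop[of h] bmor0[of k k' h] unfolding mk_def cprod_act yon_snd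
    by (simp add: comp_assoc[symmetric])
qed

lemma code_mk:
  assumes F: "bmor n (Suc m) F"
  shows "code m (mk m F) = F"
proof -
  have "(linj m, rinj m) \<in> fst (cprod (yon m) interval) (Suc m)"
    using bmor_linj bmor_rinj dom_eq by auto
  then show ?thesis using F unfolding code_def mk_def by (simp add: cop_linj_rinj bid_left)
qed

lemma act_mk:
  assumes g: "bmor d m g" and F: "bmor n (Suc d) F"
  shows "snd (cexp (yon n)) d m g (mk d F) = mk m (cop d (linj m \<circ> g) (rinj m) \<circ> F)"
proof (rule ext, rule ext)
  fix k p
  show "snd (cexp (yon n)) d m g (mk d F) k p = mk m (cop d (linj m \<circ> g) (rinj m) \<circ> F) k p"
  proof (cases "p \<in> fst (cprod (yon m) interval) k")
    case True
    then obtain a b where p: "p = (a,b)" "bmor m k a" "bmor 1 k b" using dom_eq by auto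
    have "(a \<circ> g, b) \<in> fst (cprod (yon m) interval) k \<or> True" by simp
    have d1: "(a \<circ> g, b) \<in> fst (cprod (yon d) interval) k" using p g bmor_comp dom_eq by auto
    have "cop m a b \<circ> cop d (linj m \<circ> g) (rinj m) = cop d (cop m a b \<circ> linj m \<circ> g) (cop m a b \<circ> rinj m)"
      using comp_cop[of "cop m a b"] bmor0[OF bmor_cop[OF p(2,3)]] by (simp add: comp_assoc)
    also have "\<dots> = cop d (a \<circ> g) b" using cop_linj[OF p(2)] cop_rinj[OF p(2,3)] by simp
    finally have "cop m a b \<circ> (cop d (linj m \<circ> g) (rinj m) \<circ> F) = cop d (a \<circ> g) b \<circ> F"
      by (simp add: comp_assoc[symmetric])
    then show ?thesis using True p d1 unfolding cexp_snd mk_def by simp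
  next
    case False then show ?thesis unfolding cexp_snd mk_def by simp
  qed
qed



definition bet :: "nat \<Rightarrow> nat \<Rightarrow> nat \<Rightarrow> nat set" where
  "bet n k = (SOME h. bij_betw h {0..<n choose k} {C. C \<subseteq> {1..n} \<and> card C = k})"
definition sig :: "nat set \<Rightarrow> nat \<Rightarrow> nat" where
  "sig C = (SOME h. bij_betw h {1..card C} C)"
definition tau :: "nat set \<Rightarrow> nat \<Rightarrow> nat" where
  "tau C = the_inv_into {1..card C} (sig C)"
definition Egen :: "nat \<Rightarrow> nat \<Rightarrow> nat \<Rightarrow> nat \<Rightarrow> nat" where
  "Egen n k j = (\<lambda>i. if i = 0 then 0 else if i \<in> bet n k j then tau (bet n k j) i
      else if i \<le> n then Suc k else if i = Suc n then Suc (Suc k) else 0)"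

lemma bet_bij: "bij_betw (bet n k) {0..<n choose k} {C. C \<subseteq> {1..n} \<and> card C = k}"
proof -
  have "finite {C. C \<subseteq> {1..n} \<and> card C = k}" by simp
  moreover have "card {C. C \<subseteq> {1..n} \<and> card C = k} = n choose k"
    using n_subsets[of "{1..n}" k] by simp
  ultimately have "\<exists>h. bij_betw h {0..<n choose k} {C. C \<subseteq> {1..n} \<and> card C = k}"
    using ex_bij_betw_nat_finite by metis
  then show ?thesis unfolding bet_def by (rule someI_ex)
qed

lemma bet_props: assumes "j < n choose k"
  shows "bet n k j \<subseteq> {1..n}" "card (bet n k j) = k" "finite (bet n k j)"
  using bij_betwE[OF bet_bij] assms finite_subset[of _ "{1..n}"] by auto

lemma sig_bij: assumes "finite C" shows "bij_betw (sig C) {1..card C} C"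
  unfolding sig_def by (rule someI_ex[OF ex_bij_betw_nat_finite_1[OF assms]])

lemma tau_props: assumes "finite C" "i \<in> C"
  shows "tau C i \<in> {1..card C}" "sig C (tau C i) = i"
proof -
  have b: "bij_betw (sig C) {1..card C} C" using sig_bij assms by blast
  show "sig C (tau C i) = i" unfolding tau_def using f_the_inv_into_f_bij_betw[OF b] assms by blast
  show "tau C i \<in> {1..card C}" unfolding tau_def
    using the_inv_into_into[of "sig C" "{1..card C}" i "{1..card C}"] b assms unfolding bij_betw_def by auto
qed

lemma sig_props: assumes "finite C" "x \<in> {1..card C}"
  shows "sig C x \<in> C" "tau C (sig C x) = x"
proof -
  have b: "bij_betw (sig C) {1..card C} C" using sig_bij assms by blast
  show "sig C x \<in> C" using b assms bij_betwE by blast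
  show "tau C (sig C x) = x" unfolding tau_def using b assms
    by (simp add: bij_betw_def the_inv_into_f_f)
qed

lemma bmor_Egen: assumes "j < n choose k" shows "bmor n (Suc k) (Egen n k j)"
proof -
  have "tau (bet n k j) i \<le> k" if "i \<in> bet n k j" for i
    using tau_props(1)[of "bet n k j" i] bet_props[OF assms] that by auto
  then have "tau (bet n k j) i \<le> Suc (Suc k)" if "i \<in> bet n k j" for i
    using that le_SucI by blast
  then show ?thesis using bet_props[OF assms] unfolding bmor_def Egen_def by auto
qed

lemma bmor_ext: "bmor n k F \<Longrightarrow> bmor n k G \<Longrightarrow> (\<And>i. 1 \<le> i \<Longrightarrow> i \<le> n \<Longrightarrow> F i = G i) \<Longrightarrow> F = G"
proof
  fix x assume a: "bmor n k F" "bmor n k G" "\<And>i. 1 \<le> i \<Longrightarrow> i \<le> n \<Longrightarrow> F i = G i"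
  show "F x = G x"
  proof (cases "x = 0 \<or> x = Suc n \<or> x > Suc n")
    case True then show ?thesis using a(1,2) unfolding bmor_def by auto
  next
    case False then show ?thesis using a(3)[of x] by auto
  qed
qed

lemma linj_ne: "linj m x \<noteq> Suc m" unfolding linj_def by auto
lemma linj_inj: "a \<le> Suc m \<Longrightarrow> b \<le> Suc m \<Longrightarrow> linj m a = linj m b \<Longrightarrow> a = b"
  unfolding linj_def by (auto split: if_splits)

definition GG :: "nat \<Rightarrow> nat \<Rightarrow> nat \<Rightarrow> nat \<Rightarrow> (nat \<Rightarrow> nat) \<Rightarrow> nat \<Rightarrow> nat" where
  "GG n m k j g = cop k (linj m \<circ> g) (rinj m) \<circ> Egen n k j"

lemma GG_bmor: assumes "j < n choose k" "bmor k m g" shows "bmor n (Suc m) (GG n m k j g)"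
  unfolding GG_def
  by (rule bmor_comp[OF bmor_Egen[OF assms(1)] bmor_cop[OF bmor_comp[OF assms(2) bmor_linj] bmor_rinj]])

lemma GG_in: assumes "j < n choose k" "bmor k m g" "i \<in> bet n k j"
  shows "GG n m k j g i = linj m (g (tau (bet n k j) i))"
proof -
  have "i \<noteq> 0" using bet_props[OF assms(1)] assms(3) by auto
  moreover have "tau (bet n k j) i \<le> k"
    using tau_props(1)[of "bet n k j" i] bet_props[OF assms(1)] assms(3) by auto
  ultimately show ?thesis using assms(3) unfolding GG_def Egen_def cop_def by simp
qed

lemma GG_out: assumes "j < n choose k" "bmor k m g" "1 \<le> i" "i \<le> n" "i \<notin> bet n k j"
  shows "GG n m k j g i = Suc m"
  using assms unfolding GG_def Egen_def cop_def rinj_def by simp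

lemma GG_C: assumes "j < n choose k" "bmor k m g"
  shows "bet n k j = {i. 1 \<le> i \<and> i \<le> n \<and> GG n m k j g i \<noteq> Suc m}"
proof (rule set_eqI)
  fix i
  show "i \<in> bet n k j \<longleftrightarrow> i \<in> {i. 1 \<le> i \<and> i \<le> n \<and> GG n m k j g i \<noteq> Suc m}"
  proof (cases "i \<in> bet n k j")
    case True
    then have "1 \<le> i \<and> i \<le> n" using bet_props(1)[OF assms(1)] by auto
    then show ?thesis using True GG_in[OF assms True] linj_ne by simp
  next
    case False
    then show ?thesis using GG_out[OF assms _ _ False] by auto
  qed
qed

lemma core_uniq:
  assumes "j < n choose k" "bmor k m g" "j' < n choose k'" "bmor k' m g'"
    and eq: "GG n m k j g = GG n m k' j' g'"
  shows "k = k'" "j = j'" "g = g'"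
proof -
  have C: "bet n k j = bet n k' j'" using GG_C[OF assms(1,2)] GG_C[OF assms(3,4)] eq by simp
  then show kk: "k = k'" using bet_props(2)[OF assms(1)] bet_props(2)[OF assms(3)] by simp
  have inj: "inj_on (bet n k) {0..<n choose k}" using bet_bij bij_betw_imp_inj_on by blast
  show jj: "j = j'" using inj_onD[OF inj, of j j'] C kk assms(1,3) by simp
  show "g = g'"
  proof
    fix x
    show "g x = g' x"
    proof (cases "1 \<le> x \<and> x \<le> k")
      case True
      let ?C = "bet n k j"
      have fin: "finite ?C" and ck: "card ?C = k" using bet_props[OF assms(1)] by auto
      have s: "sig ?C x \<in> ?C" "tau ?C (sig ?C x) = x" using sig_props[OF fin] True ck by auto
      have s': "sig ?C x \<in> bet n k' j'" using s(1) kk jj by simp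
      have "linj m (g x) = linj m (g' x)"
        using GG_in[OF assms(1,2) s(1)] GG_in[OF assms(3,4) s'] s(2) eq kk jj by simp
      moreover have "g x \<le> Suc m" "g' x \<le> Suc m" using assms(2,4) True kk unfolding bmor_def by auto
      ultimately show ?thesis using linj_inj by blast
    next
      case False
      then show ?thesis using assms(2,4) kk unfolding bmor_def
        by (cases "x = 0"; cases "x = Suc k") auto
    qed
  qed
qed

lemma core_ex:
  assumes F: "bmor n (Suc m) F"
  shows "\<exists>k j g. k \<le> n \<and> j < n choose k \<and> bmor k m g \<and> F = GG n m k j g"
proof -
  define C where "C = {i. 1 \<le> i \<and> i \<le> n \<and> F i \<noteq> Suc m}"
  define k where "k = card C"
  have Csub: "C \<subseteq> {1..n}" unfolding C_def by auto
  then have fin: "finite C" using finite_subset by blast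
  have kn: "k \<le> n" unfolding k_def using card_mono[OF _ Csub] by simp
  have "C \<in> {C. C \<subseteq> {1..n} \<and> card C = k}" using Csub k_def by simp
  then have "C \<in> bet n k ` {0..<n choose k}" using bet_bij[of n k] bij_betw_imp_surj_on by blast
  then obtain j where j: "j < n choose k" "bet n k j = C" by auto
  define g where "g = (\<lambda>x. if x = 0 then 0 else if x \<le> k then
      (if F (sig C x) = Suc (Suc m) then Suc m else F (sig C x))
      else if x = Suc k then Suc m else 0)"
  have Fle: "F i \<le> Suc (Suc m)" for i using F unfolding bmor_def by (cases "i \<le> Suc n") auto
  have g: "bmor k m g"
  proof -
    have "g x \<le> Suc m" if "x \<le> Suc k" for x
    proof (cases "1 \<le> x \<and> x \<le> k")
      case True
      then have "sig C x \<in> C" using sig_props(1)[OF fin] k_def by auto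
      then have "F (sig C x) \<noteq> Suc m" unfolding C_def by auto
      then show ?thesis using Fle[of "sig C x"] True unfolding g_def by auto
    next
      case False then show ?thesis unfolding g_def by auto
    qed
    then show ?thesis unfolding bmor_def g_def by auto
  qed
  have "F = GG n m k j g"
  proof (rule bmor_ext[OF F GG_bmor[OF j(1) g]])
    fix i assume i: "1 \<le> i" "i \<le> n"
    show "F i = GG n m k j g i"
    proof (cases "i \<in> C")
      case True
      have t: "tau C i \<in> {1..k}" "sig C (tau C i) = i" using tau_props[OF fin True] k_def by auto
      have "F i \<noteq> Suc m" using True unfolding C_def by auto
      then have "linj m (g (tau C i)) = F i" using t Fle[of i] unfolding g_def linj_def by auto
      then show ?thesis using GG_in[OF j(1) g] True j(2) by simp
    next
      case False
      then show ?thesis using GG_out[OF j(1) g i] j(2) i unfolding C_def by auto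
    qed
  qed
  then show ?thesis using kn j g by blast
qed



lemma act_GG: assumes "j < n choose k" "bmor k m g"
  shows "snd (cexp (yon n)) k m g (mk k (Egen n k j)) = mk m (GG n m k j g)"
  using act_mk[OF assms(2) bmor_Egen[OF assms(1)]] unfolding GG_def by simp

lemma GG_bid: assumes "j < n choose k" shows "GG n k k j (bid k) = Egen n k j"
  unfolding GG_def using bid_right[OF bmor_linj[of k]] cop_linj_rinj bid_left[OF bmor_Egen[OF assms]]
  by simp

lemma GG_comp: assumes "j < n choose k" "bmor k m g" "bmor m m' h"
  shows "cop m (linj m' \<circ> h) (rinj m') \<circ> GG n m k j g = GG n m' k j (h \<circ> g)"
proof -
  have hb: "bmor m (Suc m') (linj m' \<circ> h)" using bmor_comp[OF assms(3) bmor_linj] .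
  have "cop m (linj m' \<circ> h) (rinj m') \<circ> cop k (linj m \<circ> g) (rinj m)
      = cop k (cop m (linj m' \<circ> h) (rinj m') \<circ> linj m \<circ> g) (cop m (linj m' \<circ> h) (rinj m') \<circ> rinj m)"
    using comp_cop[of "cop m (linj m' \<circ> h) (rinj m')"] bmor0[OF bmor_cop[OF hb bmor_rinj]]
    by (simp add: comp_assoc)
  also have "\<dots> = cop k (linj m' \<circ> h \<circ> g) (rinj m')"
    using cop_linj[OF hb] cop_rinj[OF hb bmor_rinj] by simp
  finally show ?thesis unfolding GG_def by (simp add: comp_assoc[symmetric])
qed

lemma main_free:
  assumes X: "is_cset X"
  shows "bij_betw (\<lambda>\<theta>. \<lambda>i\<in>{(k,j). k \<le> n \<and> j < n choose k}. \<theta> (fst i) (mk (fst i) (Egen n (fst i) (snd i))))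
     (cnat (cexp (yon n)) X) (PiE {(k,j). k \<le> n \<and> j < n choose k} (\<lambda>i. fst X (fst i)))"
proof (rule free_hom[OF X])
  fix i m g assume i: "i \<in> {(k,j). k \<le> n \<and> j < n choose k}" and g: "bmor (fst i) m g"
  obtain k j where kj: "i = (k,j)" "j < n choose k" using i by auto
  show "snd (cexp (yon n)) (fst i) m g (mk (fst i) (Egen n (fst i) (snd i))) \<in> fst (cexp (yon n)) m"
    unfolding cexp_fst using act_GG[OF kj(2)] g kj mk_in[OF GG_bmor[OF kj(2)]] by simp
next
  fix i assume i: "i \<in> {(k,j). k \<le> n \<and> j < n choose k}"
  obtain k j where kj: "i = (k,j)" "j < n choose k" using i by auto
  show "snd (cexp (yon n)) (fst i) (fst i) (bid (fst i)) (mk (fst i) (Egen n (fst i) (snd i))) =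
        mk (fst i) (Egen n (fst i) (snd i))"
    using act_GG[OF kj(2) bmor_bid] GG_bid[OF kj(2)] kj by simp
next
  fix i m m' g h assume i: "i \<in> {(k,j). k \<le> n \<and> j < n choose k}" and g: "bmor (fst i) m g"
    and h: "bmor m m' h"
  obtain k j where kj: "i = (k,j)" "j < n choose k" using i by auto
  have g': "bmor k m g" using g kj by simp
  have "snd (cexp (yon n)) m m' h (snd (cexp (yon n)) k m g (mk k (Egen n k j)))
      = snd (cexp (yon n)) m m' h (mk m (GG n m k j g))" using act_GG[OF kj(2) g'] by simp
  also have "\<dots> = mk m' (cop m (linj m' \<circ> h) (rinj m') \<circ> GG n m k j g)"
    using act_mk[OF h GG_bmor[OF kj(2) g']] .
  also have "\<dots> = mk m' (GG n m' k j (h \<circ> g))" using GG_comp[OF kj(2) g' h] by simp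
  also have "\<dots> = snd (cexp (yon n)) k m' (h \<circ> g) (mk k (Egen n k j))"
    using act_GG[OF kj(2) bmor_comp[OF g' h]] by simp
  finally show "snd (cexp (yon n)) m m' h (snd (cexp (yon n)) (fst i) m g (mk (fst i) (Egen n (fst i) (snd i)))) =
       snd (cexp (yon n)) (fst i) m' (h \<circ> g) (mk (fst i) (Egen n (fst i) (snd i)))"
    using kj by simp
next
  fix m p assume p: "p \<in> fst (cexp (yon n)) m"
  then have p': "p \<in> cnat (cprod (yon m) interval) (yon n)" by (subst (asm) cexp_fst) assumption
  obtain k j g where kjg: "k \<le> n" "j < n choose k" "bmor k m g" "code m p = GG n m k j g"
    using core_ex[OF yoneda(1)[OF p']] by blast
  have "p = mk m (code m p)" by (rule yoneda(2)[OF p'])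
  also have "\<dots> = mk m (GG n m k j g)" using kjg(4) by simp
  also have "\<dots> = snd (cexp (yon n)) k m g (mk k (Egen n k j))"
    using act_GG[OF kjg(2,3)] by simp
  finally have pe: "p = snd (cexp (yon n)) k m g (mk k (Egen n k j))" .
  have A: "(k,j) \<in> {(k,j). k \<le> n \<and> j < n choose k}" using kjg(1,2) by simp
  have B: "bmor (fst (k,j)) m g" using kjg(3) by simp
  have C: "p = snd (cexp (yon n)) (fst (k,j)) m g (mk (fst (k,j)) (Egen n (fst (k,j)) (snd (k,j))))"
    unfolding fst_conv snd_conv by (rule pe)
  show "\<exists>i g. i \<in> {(k,j). k \<le> n \<and> j < n choose k} \<and> bmor (fst i) m g \<and>
      p = snd (cexp (yon n)) (fst i) m g (mk (fst i) (Egen n (fst i) (snd i)))"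
    using A B C by blast
next
  fix m i g i' g'
  assume i: "i \<in> {(k,j). k \<le> n \<and> j < n choose k}" and i': "i' \<in> {(k,j). k \<le> n \<and> j < n choose k}"
    and g: "bmor (fst i) m g" and g': "bmor (fst i') m g'"
    and eq: "snd (cexp (yon n)) (fst i) m g (mk (fst i) (Egen n (fst i) (snd i))) =
       snd (cexp (yon n)) (fst i') m g' (mk (fst i') (Egen n (fst i') (snd i')))"
  obtain k j where kj: "i = (k,j)" "j < n choose k" using i by auto
  obtain k' j' where kj': "i' = (k',j')" "j' < n choose k'" using i' by auto
  have gk: "bmor k m g" and gk': "bmor k' m g'" using g g' kj kj' by auto
  have "mk m (GG n m k j g) = mk m (GG n m k' j' g')"
    using eq act_GG[OF kj(2) gk] act_GG[OF kj'(2) gk'] kj kj' by simp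
  then have "code m (mk m (GG n m k j g)) = code m (mk m (GG n m k' j' g'))" by simp
  then have "GG n m k j g = GG n m k' j' g'"
    using code_mk[OF GG_bmor[OF kj(2) gk]] code_mk[OF GG_bmor[OF kj'(2) gk']] by simp
  note u = core_uniq[OF kj(2) gk kj'(2) gk' this]
  show "i = i' \<and> g = g'" using u kj(1) kj'(1) by simp
qed

lemma pie_binom: "bij_betw (\<lambda>x. \<lambda>k j. if (k,j) \<in> {(k,j). k \<le> n \<and> j < n choose k} then x (k,j) else undefined)
   (PiE {(k,j). k \<le> n \<and> j < n choose k} (\<lambda>i. fst X (fst i))) (binom_prod X n)"
proof (rule bij_betw_byWitness[where f' = "\<lambda>f. \<lambda>i\<in>{(k,j). k \<le> n \<and> j < n choose k}. f (fst i) (snd i)"])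
  show "\<forall>a\<in>PiE {(k,j). k \<le> n \<and> j < n choose k} (\<lambda>i. fst X (fst i)).
     (\<lambda>i\<in>{(k,j). k \<le> n \<and> j < n choose k}. (\<lambda>k j. if (k,j) \<in> {(k,j). k \<le> n \<and> j < n choose k} then a (k,j) else undefined) (fst i) (snd i)) = a"
    by (auto simp: fun_eq_iff PiE_def extensional_def)
  show "\<forall>a'\<in>binom_prod X n. (\<lambda>k j. if (k,j) \<in> {(k,j). k \<le> n \<and> j < n choose k}
      then (\<lambda>i\<in>{(k,j). k \<le> n \<and> j < n choose k}. a' (fst i) (snd i)) (k,j) else undefined) = a'"
    by (auto simp: fun_eq_iff binom_prod_def not_le)
  show "(\<lambda>x. \<lambda>k j. if (k,j) \<in> {(k,j). k \<le> n \<and> j < n choose k} then x (k,j) else undefined) `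
      PiE {(k,j). k \<le> n \<and> j < n choose k} (\<lambda>i. fst X (fst i)) \<subseteq> binom_prod X n"
    by (auto simp: binom_prod_def PiE_def Pi_def)
  show "(\<lambda>f. \<lambda>i\<in>{(k,j). k \<le> n \<and> j < n choose k}. f (fst i) (snd i)) ` binom_prod X n
      \<subseteq> PiE {(k,j). k \<le> n \<and> j < n choose k} (\<lambda>i. fst X (fst i))"
    by (auto simp: binom_prod_def PiE_def Pi_def)
qed

theorem corollary2p7:
  fixes X :: "'a cset" and n :: nat
  assumes "is_cset X"
  shows "\<exists>\<phi>. bij_betw \<phi> (fst (path_radj X) n) (binom_prod X n)"
proof -
  have e: "fst (path_radj X) n = cnat (cexp (yon n)) X" by (simp add: path_radj_def)
  show ?thesis unfolding e by (rule exI, rule bij_betw_trans[OF main_free[OF assms] pie_binom])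
qed


end
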